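(* Let $d\ge1$ and $\lambda=(\lambda_1,\dots,\lambda_d)$ a vector of positive integers with $\sum_t\lambda_t=n\ge2$. For distinct $i,j\in\{0,1,\dots,n-2\}$, we have $i\preceq j$ in $P(\lambda)$ if and only if $i<j$ and $p(i)+p(j-i)=p(j)$.
   Context: $\Delta_\lambda=\mathrm{conv}(e_1,\dots,e_d,\lambda)\subset\mathbb{R}^d$, with fundamental parallelepiped $\Pi_\lambda=\{\sum_{i=1}^d\gamma_i(1,e_i)+\gamma_{d+1}(1,\lambda):0\le\gamma_i<1\}\subset\mathbb{R}^{d+1}$. The poset $P(\lambda)$ is the set $\Pi_\lambda\cap\mathbb{Z}^{d+1}$ ordered by $\sigma\preceq\mu$ iff $\mu-\sigma\in\Pi_\lambda\cap\mathbb{Z}^{d+1}$. For $0\le b<n-1$ set $p(b)=\left(\sum_{t=1}^d\lceil b\lambda_t/(n-1)\rceil-b,\ \lceil b\lambda_1/(n-1)\rceil,\dots,\lceil b\lambda_d/(n-1)\rceil\right)$; the map $b\mapsto p(b)$ is a bijection from $\{0,\dots,n-2\}$ onto $\Pi_\lambda\cap\mathbb{Z}^{d+1}$, and each integer $b$ is identified with $p(b)$, so $P(\lambda)$ is regarded as a partial order $\preceq$ on $\{0,\dots,n-2\}$. *)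

theory Defs
  imports Complex_Main
begin

text \<open>Vectors in R^(d+1) / Z^(d+1) are functions on nat with coordinates 0..d
  (coordinate 0 is the leading "height" coordinate) and zero beyond d.
  lam is indexed by 1..d.\<close>

definition fund_par :: "nat \<Rightarrow> (nat \<Rightarrow> nat) \<Rightarrow> (nat \<Rightarrow> real) set" where
  "fund_par d lam = {x. \<exists>\<gamma>::nat \<Rightarrow> real.
      (\<forall>i\<in>{1..d+1}. 0 \<le> \<gamma> i \<and> \<gamma> i < 1) \<and>
      x 0 = (\<Sum>i=1..d+1. \<gamma> i) \<and>
      (\<forall>t\<in>{1..d}. x t = \<gamma> t + \<gamma> (d+1) * real (lam t)) \<and>
      (\<forall>t>d. x t = 0)}"

definition fund_par_lattice :: "nat \<Rightarrow> (nat \<Rightarrow> nat) \<Rightarrow> (nat \<Rightarrow> int) set" where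
  "fund_par_lattice d lam = {z. (\<forall>t>d. z t = 0) \<and> (\<lambda>t. real_of_int (z t)) \<in> fund_par d lam}"

definition pvec :: "nat \<Rightarrow> (nat \<Rightarrow> nat) \<Rightarrow> nat \<Rightarrow> nat \<Rightarrow> nat \<Rightarrow> int" where
  "pvec d lam n b t =
     (if t = 0 then (\<Sum>s=1..d. \<lceil>real b * real (lam s) / real (n - 1)\<rceil>) - int b
      else if t \<le> d then \<lceil>real b * real (lam t) / real (n - 1)\<rceil>
      else 0)"

definition P_le :: "nat \<Rightarrow> (nat \<Rightarrow> nat) \<Rightarrow> nat \<Rightarrow> nat \<Rightarrow> nat \<Rightarrow> bool" where
  "P_le d lam n i j \<longleftrightarrow> (\<lambda>t. pvec d lam n j t - pvec d lam n i t) \<in> fund_par_lattice d lam"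

end

theory Submission
  imports Defs
begin

lemma pvec_sumdiff:
  "(\<Sum>t=1..d. pvec d lam n b t) - pvec d lam n b 0 = int b"
proof -
  have "(\<Sum>t=1..d. pvec d lam n b t) = (\<Sum>t=1..d. \<lceil>real b * real (lam t) / real (n - 1)\<rceil>)"
    by (rule sum.cong) (auto simp: pvec_def)
  then show ?thesis by (simp add: pvec_def)
qed

lemma sum_split_last: "(\<Sum>i=1..d+1. (g::nat\<Rightarrow>real) i) = (\<Sum>i=1..d. g i) + g (d+1)"
  by simp

lemma lattice_pvec:
  assumes n: "n = (\<Sum>t=1..d. lam t)" and n2: "n \<ge> 2" and b: "b < n - 1"
  shows "pvec d lam n b \<in> fund_par_lattice d lam"
proof -
  define N where "N = real (n - 1)"
  have Npos: "N > 0" using n2 by (simp add: N_def)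
  have Nn: "N = real n - 1" using n2 by (simp add: N_def)
  define g where "g = real b / N"
  define \<gamma> where "\<gamma> = (\<lambda>i. if i = d + 1 then g else
       if i \<in> {1..d} then real_of_int \<lceil>real b * real (lam i) / N\<rceil> - real b * real (lam i) / N else 0)"
  have g01: "0 \<le> g \<and> g < 1" using b Npos n2 by (simp add: g_def N_def divide_simps)
  have c1: "\<forall>i\<in>{1..d+1}. 0 \<le> \<gamma> i \<and> \<gamma> i < 1"
  proof
    fix i assume "i \<in> {1..d+1}"
    show "0 \<le> \<gamma> i \<and> \<gamma> i < 1"
      using g01 by (auto simp: \<gamma>_def) linarith+
  qed
  have sl: "(\<Sum>i=1..d. \<gamma> i) = (\<Sum>i=1..d. real_of_int \<lceil>real b * real (lam i) / N\<rceil>) - g * real n"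
  proof -
    have "(\<Sum>i=1..d. \<gamma> i) = (\<Sum>i=1..d. real_of_int \<lceil>real b * real (lam i) / N\<rceil> - g * real (lam i))"
      by (rule sum.cong) (auto simp: \<gamma>_def g_def)
    also have "\<dots> = (\<Sum>i=1..d. real_of_int \<lceil>real b * real (lam i) / N\<rceil>) - g * real n"
      by (simp add: sum_subtractf sum_distrib_left n)
    finally show ?thesis .
  qed
  have gN: "g * N = real b" using Npos by (simp add: g_def)
  have c2: "real_of_int (pvec d lam n b 0) = (\<Sum>i=1..d+1. \<gamma> i)"
    unfolding sum_split_last sl
    using gN Nn by (simp add: pvec_def N_def \<gamma>_def algebra_simps)
  have c3: "\<forall>t\<in>{1..d}. real_of_int (pvec d lam n b t) = \<gamma> t + \<gamma> (d+1) * real (lam t)"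
    by (auto simp: pvec_def \<gamma>_def g_def N_def)
  have c4: "\<forall>t>d. pvec d lam n b t = 0" by (simp add: pvec_def)
  show ?thesis
    unfolding fund_par_lattice_def fund_par_def
    using c1 c2 c3 c4 by auto
qed

lemma lattice_is_pvec:
  assumes n: "n = (\<Sum>t=1..d. lam t)" and n2: "n \<ge> 2"
    and z: "z \<in> fund_par_lattice d lam"
  shows "\<exists>b. b < n - 1 \<and> z = pvec d lam n b"
proof -
  define N where "N = real (n - 1)"
  have Npos: "N > 0" using n2 by (simp add: N_def)
  have Nn: "N = real n - 1" using n2 by (simp add: N_def)
  from z obtain \<gamma> :: "nat \<Rightarrow> real" where
    zd: "\<forall>t>d. z t = 0" and
    g1: "\<forall>i\<in>{1..d+1}. 0 \<le> \<gamma> i \<and> \<gamma> i < 1" and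
    g2: "real_of_int (z 0) = (\<Sum>i=1..d+1. \<gamma> i)" and
    g3: "\<forall>t\<in>{1..d}. real_of_int (z t) = \<gamma> t + \<gamma> (d+1) * real (lam t)"
    unfolding fund_par_lattice_def fund_par_def by auto
  define g where "g = \<gamma> (d+1)"
  have g01: "0 \<le> g" "g < 1" using g1 by (auto simp: g_def)
  have "(\<Sum>i=1..d. \<gamma> i) = (\<Sum>i=1..d. real_of_int (z i) - g * real (lam i))"
    by (rule sum.cong) (use g3 in \<open>auto simp: g_def\<close>)
  also have "\<dots> = (\<Sum>i=1..d. real_of_int (z i)) - g * real n"
    by (simp add: sum_subtractf sum_distrib_left n)
  finally have s: "(\<Sum>i=1..d. \<gamma> i) = (\<Sum>i=1..d. real_of_int (z i)) - g * real n" .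
  define B where "B = (\<Sum>i=1..d. z i) - z 0"
  have BgN: "real_of_int B = g * N"
  proof -
    have "g * real n = g + N * g" by (simp add: Nn algebra_simps)
    then show ?thesis using g2 s unfolding sum_split_last B_def by (simp add: g_def)
  qed
  have B0: "B \<ge> 0"
  proof -
    have "real_of_int B \<ge> 0" using BgN g01 Npos by simp
    then show ?thesis by simp
  qed
  have BN: "B < int (n - 1)"
  proof -
    have "g * N < N" using g01 Npos by simp
    then have "real_of_int B < real (n - 1)" using BgN unfolding N_def by linarith
    then show ?thesis by linarith
  qed
  define b where "b = nat B"
  have bB: "int b = B" using B0 by (simp add: b_def)
  have gb: "g = real b / N" using BgN bB Npos by (simp add: field_simps)
  have zt: "z t = \<lceil>real b * real (lam t) / real (n - 1)\<rceil>" if t: "t \<in> {1..d}" for t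
  proof -
    have "real_of_int (z t) = \<gamma> t + g * real (lam t)" using g3 t by (simp add: g_def)
    moreover have "0 \<le> \<gamma> t" "\<gamma> t < 1" using g1 t by auto
    ultimately have "real_of_int (z t) - 1 < g * real (lam t)" "g * real (lam t) \<le> real_of_int (z t)"
      by linarith+
    then have "\<lceil>g * real (lam t)\<rceil> = z t" by (simp add: ceiling_eq_iff)
    then show ?thesis using gb N_def by simp
  qed
  have "z = pvec d lam n b"
  proof
    fix t
    show "z t = pvec d lam n b t"
    proof (cases "t = 0")
      case True
      have "(\<Sum>i=1..d. z i) = (\<Sum>i=1..d. \<lceil>real b * real (lam i) / real (n - 1)\<rceil>)"
        by (rule sum.cong) (use zt in auto)
      then show ?thesis using True B_def bB by (simp add: pvec_def)
    next
      case False
      then show ?thesis using zt zd by (auto simp: pvec_def)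
    qed
  qed
  then show ?thesis using BN bB by auto
qed

theorem lemma2p13:
  fixes d n :: nat and lam :: "nat \<Rightarrow> nat" and i j :: nat
  assumes "d \<ge> 1"
    and "\<forall>t\<in>{1..d}. lam t > 0"
    and "n = (\<Sum>t=1..d. lam t)"
    and "n \<ge> 2"
    and "i < n - 1" and "j < n - 1" and "i \<noteq> j"
  shows "P_le d lam n i j \<longleftrightarrow>
           (i < j \<and> (\<lambda>t. pvec d lam n i t + pvec d lam n (j - i) t) = pvec d lam n j)"
proof
  assume "P_le d lam n i j"
  then have "(\<lambda>t. pvec d lam n j t - pvec d lam n i t) \<in> fund_par_lattice d lam"
    by (simp add: P_le_def)
  then obtain b where b: "b < n - 1"
    and e: "(\<lambda>t. pvec d lam n j t - pvec d lam n i t) = pvec d lam n b"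
    using lattice_is_pvec assms(3,4) by blast
  have "(\<Sum>t=1..d. pvec d lam n b t) - pvec d lam n b 0
      = ((\<Sum>t=1..d. pvec d lam n j t) - pvec d lam n j 0) - ((\<Sum>t=1..d. pvec d lam n i t) - pvec d lam n i 0)"
    unfolding e[symmetric] by (simp add: sum_subtractf)
  then have "int b = int j - int i"
    using pvec_sumdiff[of d lam n b] pvec_sumdiff[of d lam n j] pvec_sumdiff[of d lam n i] by linarith
  then have ij: "i < j" and bj: "b = j - i" using assms(7) by auto
  have "(\<lambda>t. pvec d lam n i t + pvec d lam n (j - i) t) = pvec d lam n j"
  proof
    fix t
    have "pvec d lam n j t - pvec d lam n i t = pvec d lam n b t" using fun_cong[OF e, of t] by simp
    then show "pvec d lam n i t + pvec d lam n (j - i) t = pvec d lam n j t" using bj by simp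
  qed
  then show "i < j \<and> (\<lambda>t. pvec d lam n i t + pvec d lam n (j - i) t) = pvec d lam n j"
    using ij by simp
next
  assume h: "i < j \<and> (\<lambda>t. pvec d lam n i t + pvec d lam n (j - i) t) = pvec d lam n j"
  have "(\<lambda>t. pvec d lam n j t - pvec d lam n i t) = pvec d lam n (j - i)"
  proof
    fix t
    have "pvec d lam n i t + pvec d lam n (j - i) t = pvec d lam n j t" using fun_cong[OF conjunct2[OF h], of t] by simp
    then show "pvec d lam n j t - pvec d lam n i t = pvec d lam n (j - i) t" by simp
  qed
  moreover have "pvec d lam n (j - i) \<in> fund_par_lattice d lam"
    using lattice_pvec assms(3,4,6) by (metis diff_le_self le_less_trans)
  ultimately show "P_le d lam n i j" by (simp add: P_le_def)
qed

end
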